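(* Let $d,g\ge 1$ be integers, $n=dg$, and let $\pi$ be a permutation of $\{0,\dots,n-1\}$ such that $\pi(i)\neq i$ for all $i$. Then any routing of $\pi$ on the network $\mathrm{POPS}(d,g)$ uses at least $\lceil d/g\rceil$ slots.
   Context: The network $\mathrm{POPS}(d,g)$ has $n=dg$ processors indexed $0,\dots,n-1$; processor $i$ belongs to group $\mathrm{group}(i):=\lfloor i/d\rfloor\in\{0,\dots,g-1\}$. For each pair of groups $a,b$ there is a coupler $c(b,a)$ whose sources are the processors of group $a$ and whose destinations are the processors of group $b$ ($g^2$ couplers in total). Processor $i$ can transmit to the couplers $c(a,\mathrm{group}(i))$, $a=0,\dots,g-1$, and receive from the couplers $c(\mathrm{group}(i),b)$, $b=0,\dots,g-1$. In one slot each processor, in parallel, performs local computation, sends one packet to any subset of its transmitters, and receives a packet from one of its receivers; no two processors may send to the same coupler in the same slot. Processors may store packets between slots. Routing a permutation $\pi$ means: initially processor $i$ holds packet $p_i$ with destination $\pi(i)$, and at the end each $p_i$ must be at processor $\pi(i)$. *)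

theory Defs
  imports Complex_Main "HOL-Combinatorics.Permutations"
begin

(* POPS(d,g): n = d*g processors 0..n-1, processor i in group i div d.
   Coupler c(a,b) has sources = group b, destinations = group a.
   Packets are identified by the index of their origin processor: packet p_i is i.

   A schedule is given by three functions indexed by slot t and processor i:
     sendp t i :: nat option  -- the packet processor i transmits in slot t (None = no transmission)
     cpl t i :: nat set     -- the set of groups a such that i transmits to coupler c(a, group i)
     rcv t j :: nat option  -- the group b such that j listens to coupler c(group j, b) (None = none)
*)

definition grp :: "nat \<Rightarrow> nat \<Rightarrow> nat" where
  "grp d i = i div d"

definition received ::
  "nat \<Rightarrow> nat \<Rightarrow> (nat \<Rightarrow> nat \<Rightarrow> nat option) \<Rightarrow> (nat \<Rightarrow> nat \<Rightarrow> nat set)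
    \<Rightarrow> (nat \<Rightarrow> nat \<Rightarrow> nat option) \<Rightarrow> nat \<Rightarrow> nat \<Rightarrow> nat set" where
  "received d n sendp cpl rcv t j =
     {p. \<exists>b i. rcv t j = Some b \<and> i < n \<and> grp d i = b \<and> grp d j \<in> cpl t i
              \<and> sendp t i = Some p}"

(* packets held (stored) by processor j at the beginning of slot t *)
fun held ::
  "nat \<Rightarrow> nat \<Rightarrow> (nat \<Rightarrow> nat \<Rightarrow> nat option) \<Rightarrow> (nat \<Rightarrow> nat \<Rightarrow> nat set)
    \<Rightarrow> (nat \<Rightarrow> nat \<Rightarrow> nat option) \<Rightarrow> nat \<Rightarrow> nat \<Rightarrow> nat set" where
  "held d n sendp cpl rcv 0 j = {j}"
| "held d n sendp cpl rcv (Suc t) j =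
     held d n sendp cpl rcv t j \<union> received d n sendp cpl rcv t j"

definition valid_schedule ::
  "nat \<Rightarrow> nat \<Rightarrow> nat \<Rightarrow> (nat \<Rightarrow> nat \<Rightarrow> nat option) \<Rightarrow> (nat \<Rightarrow> nat \<Rightarrow> nat set)
    \<Rightarrow> (nat \<Rightarrow> nat \<Rightarrow> nat option) \<Rightarrow> bool" where
  "valid_schedule d g T sendp cpl rcv \<longleftrightarrow>
     (\<forall>t<T. \<forall>i<d*g.
        (\<forall>p. sendp t i = Some p \<longrightarrow> p \<in> held d (d*g) sendp cpl rcv t i)
      \<and> (sendp t i = None \<longrightarrow> cpl t i = {})
      \<and> cpl t i \<subseteq> {..<g}
      \<and> (\<forall>b. rcv t i = Some b \<longrightarrow> b < g))
   \<and> (\<forall>t<T. \<forall>i<d*g. \<forall>i'<d*g. \<forall>a.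
        a \<in> cpl t i \<and> a \<in> cpl t i' \<and> grp d i = grp d i' \<longrightarrow> i = i')"

definition routes ::
  "nat \<Rightarrow> nat \<Rightarrow> (nat \<Rightarrow> nat) \<Rightarrow> nat \<Rightarrow> (nat \<Rightarrow> nat \<Rightarrow> nat option)
    \<Rightarrow> (nat \<Rightarrow> nat \<Rightarrow> nat set) \<Rightarrow> (nat \<Rightarrow> nat \<Rightarrow> nat option) \<Rightarrow> bool" where
  "routes d g \<pi> T sendp cpl rcv \<longleftrightarrow>
     valid_schedule d g T sendp cpl rcv \<and>
     (\<forall>i<d*g. i \<in> held d (d*g) sendp cpl rcv T (\<pi> i))"

end

theory Submission
  imports Defs
begin

lemma held_sub:
  "p \<in> held d n s c r t j \<Longrightarrow> p = j \<or> (\<exists>t'<t. p \<in> received d n s c r t' j)"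
proof (induction t)
  case 0 then show ?case by simp
next
  case (Suc t)
  then show ?case using less_SucI by auto
qed

theorem proposition1:
  fixes d g T :: nat and \<pi> :: "nat \<Rightarrow> nat"
    and sendp :: "nat \<Rightarrow> nat \<Rightarrow> nat option" and cpl :: "nat \<Rightarrow> nat \<Rightarrow> nat set"
    and rcv :: "nat \<Rightarrow> nat \<Rightarrow> nat option"
  assumes "d \<ge> 1" and "g \<ge> 1"
    and "\<pi> permutes {..<d*g}"
    and "\<forall>i<d*g. \<pi> i \<noteq> i"
    and "routes d g \<pi> T sendp cpl rcv"
  shows "T \<ge> nat (ceiling (real d / real g))"
proof -
  let ?n = "d*g"
  let ?B = "{..<T} \<times> {..<g} \<times> {..<g}"
  define P where "P i x = (\<exists>k<?n. grp d k = fst (snd x) \<and> snd (snd x) \<in> cpl (fst x) k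
       \<and> sendp (fst x) k = Some i)" for i x
  have V: "valid_schedule d g T sendp cpl rcv" and H: "\<forall>i<?n. i \<in> held d ?n sendp cpl rcv T (\<pi> i)"
    using assms(5) unfolding routes_def by auto
  have ex: "\<exists>x. x \<in> ?B \<and> P i x" if i: "i < ?n" for i
  proof -
    have "i \<in> held d ?n sendp cpl rcv T (\<pi> i)" using H i by auto
    moreover have "\<pi> i \<noteq> i" using assms(4) i by auto
    ultimately obtain t where t: "t < T" and r: "i \<in> received d ?n sendp cpl rcv t (\<pi> i)"
      using held_sub[of i d ?n sendp cpl rcv T "\<pi> i"] by auto
    then obtain k where k: "k < ?n" "grp d (\<pi> i) \<in> cpl t k" "sendp t k = Some i"
      unfolding received_def by blast
    have "cpl t k \<subseteq> {..<g}" using V t k(1) unfolding valid_schedule_def by blast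
    with k(2) have a: "grp d (\<pi> i) < g" by auto
    have "grp d k < g" using k(1) assms(1) unfolding grp_def
      by (simp add: less_mult_imp_div_less mult.commute)
    then show ?thesis using t a k unfolding P_def
      by (intro exI[of _ "(t, grp d k, grp d (\<pi> i))"]) auto
  qed
  define f where "f i = (SOME x. x \<in> ?B \<and> P i x)" for i
  have f: "f i \<in> ?B \<and> P i (f i)" if "i < ?n" for i
    unfolding f_def using someI_ex[OF ex[OF that]] .
  have inj: "inj_on f {..<?n}"
  proof (rule inj_onI)
    fix i j assume i: "i \<in> {..<?n}" and j: "j \<in> {..<?n}" and e: "f i = f j"
    obtain t b a where fi: "f i = (t, b, a)" by (cases "f i") auto
    have ti: "t < T" using f[of i] i fi by auto
    obtain k where k: "k < ?n" "grp d k = b" "a \<in> cpl t k" "sendp t k = Some i"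
      using f[of i] i fi unfolding P_def by auto
    obtain k' where k': "k' < ?n" "grp d k' = b" "a \<in> cpl t k'" "sendp t k' = Some j"
      using f[of j] j fi e unfolding P_def by auto
    have "k = k'" using V ti k k' unfolding valid_schedule_def by metis
    then show "i = j" using k k' by simp
  qed
  have sub: "f ` {..<?n} \<subseteq> ?B" using f by blast
  have "?n \<le> card ?B"
    using card_inj_on_le[OF inj sub] by simp
  then have "d * g \<le> T * g * g" by (simp add: card_cartesian_product)
  then have "d \<le> T * g" using assms(2) by simp
  then have "real d / real g \<le> real T" using assms(2)
    by (simp add: divide_le_eq) (metis of_nat_le_iff of_nat_mult)
  then show ?thesis by (simp add: le_nat_iff ceiling_le_iff)
qed

end
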